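(* Let $n\ge3$ be odd and let $M$ be the sub-add move matrix. Then the length of every directed cycle in $\Gamma_{M,\,n}$ divides $4\varphi(n)$, where $\varphi$ is Euler's totient function.
   Context: The sub-add move matrix is $M=\begin{pmatrix}1&-1\\1&1\end{pmatrix}$. For $n\in\mathbb N$, $\Gamma_{M,\,n}$ is the directed graph with vertex set $\mathbb Z_n^2$ and arcs $((a,b),(a-b,a+b))$ for all $(a,b)\in\mathbb Z_n^2$ (computed mod $n$; loops allowed). A directed cycle is a cycle in the underlying undirected graph such that in the induced directed subgraph every vertex has in-degree and out-degree $1$; a loop counts as a directed $1$-cycle and a pair of opposite arcs as a directed $2$-cycle. *)

theory Defs
  imports "HOL-Number_Theory.Number_Theory"
begin

text \<open>The sub-add move matrix M = [[1,-1],[1,1]] acting on Z_n^2.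
  Z_n is represented by the residues {0..<n} of int; arithmetic is taken mod n.\<close>

definition subadd_move :: "nat \<Rightarrow> int \<times> int \<Rightarrow> int \<times> int" where
  "subadd_move n v = ((fst v - snd v) mod int n, (fst v + snd v) mod int n)"

definition gamma_vertices :: "nat \<Rightarrow> (int \<times> int) set" where
  "gamma_vertices n = {0..<int n} \<times> {0..<int n}"

definition gamma_arc :: "nat \<Rightarrow> int \<times> int \<Rightarrow> int \<times> int \<Rightarrow> bool" where
  "gamma_arc n u v \<longleftrightarrow> u \<in> gamma_vertices n \<and> v = subadd_move n u"

text \<open>A directed cycle of length k = length vs: distinct vertices v_0,...,v_{k-1}
  with arcs v_i -> v_{(i+1) mod k}. (Length 1 = loop, length 2 = pair of opposite arcs.)\<close>
definition gamma_directed_cycle :: "nat \<Rightarrow> (int \<times> int) list \<Rightarrow> bool" where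
  "gamma_directed_cycle n vs \<longleftrightarrow>
     vs \<noteq> [] \<and> distinct vs \<and> set vs \<subseteq> gamma_vertices n \<and>
     (\<forall>i < length vs. gamma_arc n (vs ! i) (vs ! ((i + 1) mod length vs)))"

end

theory Submission
  imports Defs
begin
lemma sm2: "(subadd_move n ^^ 2) (a,b) = ((- 2*b) mod int n, (2*a) mod int n)"
proof -
  have "((a - b) mod int n - (a + b) mod int n) mod int n = (-2*b) mod int n"
    by (simp add: mod_diff_eq)
  moreover have "((a - b) mod int n + (a + b) mod int n) mod int n = (2*a) mod int n"
    by (simp add: mod_add_eq)
  ultimately show ?thesis by (simp add: subadd_move_def numeral_2_eq_2)
qed

lemma mmr: "(c * (x mod int n)) mod int n = (c * x) mod int n"
  by (rule mod_mult_right_eq)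

lemma sm4: "(subadd_move n ^^ 4) (a,b) = ((- 4*a) mod int n, (- 4*b) mod int n)"
proof -
  have e: "(4::nat) = 2 + 2" by simp
  have "(subadd_move n ^^ 4) (a,b) = (subadd_move n ^^ 2) ((subadd_move n ^^ 2) (a,b))"
    by (simp only: e funpow_add o_def)
  also have "\<dots> = ((- 2 * ((2 * a) mod int n)) mod int n, (2 * ((- 2 * b) mod int n)) mod int n)"
    by (simp only: sm2)
  also have "\<dots> = ((- 2 * (2 * a)) mod int n, (2 * (- 2 * b)) mod int n)"
    by (simp only: mmr)
  also have "\<dots> = ((- 4*a) mod int n, (- 4*b) mod int n)"
    by simp
  finally show ?thesis .
qed

lemma sm4j:
  assumes "0 \<le> a" "a < int n" "0 \<le> b" "b < int n"
  shows "(subadd_move n ^^ (4*j)) (a,b) = (((- 4)^j*a) mod int n, ((- 4)^j*b) mod int n)"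
proof (induction j)
  case 0
  then show ?case using assms by simp
next
  case (Suc j)
  have "(subadd_move n ^^ (4*Suc j)) (a,b) = (subadd_move n ^^ 4) ((subadd_move n ^^ (4*j)) (a,b))"
    by (simp add: funpow_add)
  also have "\<dots> = ((- 4 * (((- 4)^j*a) mod int n)) mod int n, (- 4 * (((- 4)^j*b) mod int n)) mod int n)"
    by (simp only: Suc.IH sm4)
  also have "\<dots> = ((- 4 * ((- 4)^j*a)) mod int n, (- 4 * ((- 4)^j*b)) mod int n)"
    by (simp only: mmr)
  also have "\<dots> = (((- 4)^Suc j*a) mod int n, ((- 4)^Suc j*b) mod int n)"
    by (simp add: mult.assoc)
  finally show ?case .
qed

lemma pow4:
  assumes "n \<ge> 3" "odd n"
  shows "((- 4::int)^totient n) mod int n = 1"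
proof -
  have ev: "even (totient n)" using assms by (intro totient_even) auto
  have cop: "coprime (4::nat) n" using assms
    by (metis coprime_power_left_iff coprime_commute odd_imp_coprime_nat numeral_Bit0 power2_eq_square numeral_2_eq_2 mult_2)
  have "[4 ^ totient n = 1] (mod n)" using euler_theorem[OF cop] .
  hence "(4::nat) ^ totient n mod n = 1" using assms by (simp add: cong_def)
  hence "int ((4::nat) ^ totient n mod n) = 1" by simp
  hence "(4::int) ^ totient n mod int n = 1" by (simp add: zmod_int)
  thus ?thesis using ev by simp
qed

theorem theorem6p2:
  fixes n :: nat and vs :: "(int \<times> int) list"
  assumes "n \<ge> 3" and "odd n"
    and "gamma_directed_cycle n vs"
  shows "length vs dvd 4 * totient n"
proof -
  define f where "f = subadd_move n"
  define k where "k = length vs"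
  define v0 where "v0 = vs ! 0"
  have ne: "vs \<noteq> []" and dist: "distinct vs" and sub: "set vs \<subseteq> gamma_vertices n"
    and arc: "\<And>i. i < k \<Longrightarrow> vs ! ((i + 1) mod k) = f (vs ! i)"
    using assms(3) unfolding gamma_directed_cycle_def gamma_arc_def f_def k_def by auto
  have kpos: "k > 0" using ne k_def by simp
  have L1: "i < k \<Longrightarrow> vs ! i = (f ^^ i) v0" for i
  proof (induction i)
    case 0 then show ?case by (simp add: v0_def)
  next
    case (Suc i)
    have lt: "i < k" "Suc i < k" using Suc.prems by auto
    have "vs ! ((i + 1) mod k) = f (vs ! i)" using arc[OF lt(1)] .
    moreover have "(i + 1) mod k = Suc i" using lt by simp
    ultimately show ?case using Suc.IH[OF lt(1)] by simp
  qed
  have L2: "(f ^^ k) v0 = v0"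
  proof -
    have a1: "vs ! (((k - 1) + 1) mod k) = f (vs ! (k - 1))" using arc[of "k - 1"] kpos by simp
    have "((k - 1) + 1) mod k = 0" using kpos by simp
    hence "vs ! 0 = f (vs ! (k - 1))" using a1 by metis
    hence "v0 = f ((f ^^ (k - 1)) v0)" using kpos L1[of "k - 1"] by (simp add: v0_def)
    also have "\<dots> = (f ^^ Suc (k - 1)) v0" by simp
    finally show ?thesis using kpos by simp
  qed
  have L2q: "(f ^^ (k * q)) v0 = v0" for q
  proof (induction q)
    case 0 then show ?case by simp
  next
    case (Suc q)
    have "(f ^^ (k * Suc q)) v0 = (f ^^ k) ((f ^^ (k * q)) v0)"
      by (simp add: funpow_add add.commute)
    then show ?case using Suc L2 by simp
  qed
  have L3: "(f ^^ m) v0 = vs ! (m mod k)" for m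
  proof -
    have "m = m mod k + k * (m div k)" by simp
    hence "(f ^^ m) v0 = (f ^^ (m mod k)) ((f ^^ (k * (m div k))) v0)"
      by (metis funpow_add o_apply)
    also have "\<dots> = (f ^^ (m mod k)) v0" using L2q by simp
    also have "\<dots> = vs ! (m mod k)" using L1[of "m mod k"] kpos by simp
    finally show ?thesis .
  qed
  obtain a b where ab: "v0 = (a, b)" by fastforce
  have "v0 \<in> gamma_vertices n" using sub ne v0_def nth_mem[of 0 vs] by auto
  hence rng: "0 \<le> a" "a < int n" "0 \<le> b" "b < int n" using ab by (auto simp: gamma_vertices_def)
  have p: "((- 4::int)^totient n) mod int n = 1" using pow4 assms(1,2) .
  have ma: "((- 4::int)^totient n * a) mod int n = a"
  proof -
    have "((- 4::int)^totient n * a) mod int n = ((((- 4::int)^totient n) mod int n) * a) mod int n"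
      by (simp add: mod_mult_left_eq)
    also have "\<dots> = a" using p rng by simp
    finally show ?thesis .
  qed
  have mb: "((- 4::int)^totient n * b) mod int n = b"
  proof -
    have "((- 4::int)^totient n * b) mod int n = ((((- 4::int)^totient n) mod int n) * b) mod int n"
      by (simp add: mod_mult_left_eq)
    also have "\<dots> = b" using p rng by simp
    finally show ?thesis .
  qed
  have "(f ^^ (4 * totient n)) v0 = v0"
    using sm4j[OF rng, of "totient n"] ma mb ab f_def by simp
  hence "vs ! ((4 * totient n) mod k) = vs ! 0" using L3 v0_def by simp
  hence "(4 * totient n) mod k = 0"
    using dist kpos k_def nth_eq_iff_index_eq[OF dist] by simp
  thus ?thesis using k_def by (simp add: mod_eq_0_iff_dvd)
qed
end
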